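(* Let $R=\bigoplus_{\alpha\in\Gamma}R_{\alpha}$ be an integrally closed graded integral domain. Then $R$ is a graded-Prüfer domain if and only if every nonzero finitely generated homogeneous ideal of $R$ is a $v$-ideal.
   Context: $\Gamma$ is a commutative cancellative monoid (written additively) whose quotient group $\langle\Gamma\rangle$ is torsion-free. A graded integral domain $R=\bigoplus_{\alpha\in\Gamma}R_\alpha$ is an integral domain that is the direct sum of additive subgroups $R_\alpha$ with $R_\alpha R_\beta\subseteq R_{\alpha+\beta}$, with quotient field $K$. An ideal $I$ is homogeneous if $I=\bigoplus_\alpha(I\cap R_\alpha)$. $R$ is a graded-Prüfer domain if every nonzero finitely generated homogeneous ideal of $R$ is invertible. An ideal $I$ is a $v$-ideal if $I=(R:(R:I))$, where $(R:E)=\{x\in K: xE\subseteq R\}$. *)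

theory Defs
  imports Main
begin

definition nsmul :: "nat \<Rightarrow> 'g::ab_group_add \<Rightarrow> 'g" where
  "nsmul n x = ((+) x ^^ n) 0"

definition hom_family :: "'g set \<Rightarrow> ('g \<Rightarrow> 'k::field set) \<Rightarrow> ('g \<Rightarrow> 'k) \<Rightarrow> bool" where
  "hom_family \<Gamma> D f \<longleftrightarrow>
     finite {\<alpha>. f \<alpha> \<noteq> 0} \<and> {\<alpha>. f \<alpha> \<noteq> 0} \<subseteq> \<Gamma> \<and> (\<forall>\<alpha>\<in>\<Gamma>. f \<alpha> \<in> D \<alpha>)"

text \<open>R (a subring of the field 'k) is a graded integral domain
  R = (+)_{alpha in Gamma} R_alpha, where Gamma is a commutative (cancellative)
  submonoid of the abelian group 'g whose generated group {a - b} is torsion-free.\<close>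
definition graded_domain :: "'g::ab_group_add set \<Rightarrow> 'k::field set \<Rightarrow> ('g \<Rightarrow> 'k set) \<Rightarrow> bool" where
  "graded_domain \<Gamma> R Rg \<longleftrightarrow>
     0 \<in> \<Gamma> \<and> (\<forall>a\<in>\<Gamma>. \<forall>b\<in>\<Gamma>. a + b \<in> \<Gamma>) \<and>
     (\<forall>a\<in>\<Gamma>. \<forall>b\<in>\<Gamma>. \<forall>n::nat. n > 0 \<longrightarrow> nsmul n (a - b) = 0 \<longrightarrow> a = b) \<and>
     0 \<in> R \<and> 1 \<in> R \<and> (\<forall>x\<in>R. \<forall>y\<in>R. x + y \<in> R \<and> x * y \<in> R \<and> - x \<in> R) \<and>
     (\<forall>\<alpha>\<in>\<Gamma>. Rg \<alpha> \<subseteq> R \<and> 0 \<in> Rg \<alpha> \<and> (\<forall>x\<in>Rg \<alpha>. \<forall>y\<in>Rg \<alpha>. x - y \<in> Rg \<alpha>)) \<and>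
     (\<forall>\<alpha>\<in>\<Gamma>. \<forall>\<beta>\<in>\<Gamma>. \<forall>x\<in>Rg \<alpha>. \<forall>y\<in>Rg \<beta>. x * y \<in> Rg (\<alpha> + \<beta>)) \<and>
     (\<forall>r\<in>R. \<exists>f. hom_family \<Gamma> Rg f \<and> r = sum f {\<alpha>. f \<alpha> \<noteq> 0}) \<and>
     (\<forall>f. hom_family \<Gamma> Rg f \<and> sum f {\<alpha>. f \<alpha> \<noteq> 0} = 0 \<longrightarrow> (\<forall>\<alpha>. f \<alpha> = 0))"

definition is_quotient_field :: "'k::field set \<Rightarrow> bool" where
  "is_quotient_field R \<longleftrightarrow> (\<forall>x. \<exists>a\<in>R. \<exists>b\<in>R. b \<noteq> 0 \<and> x = a / b)"

definition integrally_closed :: "'k::field set \<Rightarrow> bool" where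
  "integrally_closed R \<longleftrightarrow>
     (\<forall>x. (\<exists>n::nat. \<exists>c. n > 0 \<and> (\<forall>i<n. c i \<in> R) \<and> x ^ n + (\<Sum>i<n. c i * x ^ i) = 0)
          \<longrightarrow> x \<in> R)"

definition is_ideal :: "'k::field set \<Rightarrow> 'k set \<Rightarrow> bool" where
  "is_ideal R I \<longleftrightarrow> I \<subseteq> R \<and> 0 \<in> I \<and> (\<forall>x\<in>I. \<forall>y\<in>I. x + y \<in> I) \<and>
     (\<forall>r\<in>R. \<forall>x\<in>I. r * x \<in> I)"

definition homogeneous_ideal :: "'g set \<Rightarrow> 'k::field set \<Rightarrow> ('g \<Rightarrow> 'k set) \<Rightarrow> 'k set \<Rightarrow> bool" where
  "homogeneous_ideal \<Gamma> R Rg I \<longleftrightarrow> is_ideal R I \<and>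
     (\<forall>x\<in>I. \<exists>f. hom_family \<Gamma> (\<lambda>\<alpha>. Rg \<alpha> \<inter> I) f \<and> x = sum f {\<alpha>. f \<alpha> \<noteq> 0})"

definition ideal_gen :: "'k::field set \<Rightarrow> 'k set \<Rightarrow> 'k set" where
  "ideal_gen R S = {\<Sum>s\<in>T. c s * s | T c. finite T \<and> T \<subseteq> S \<and> (\<forall>s\<in>T. c s \<in> R)}"

definition fin_gen_ideal :: "'k::field set \<Rightarrow> 'k set \<Rightarrow> bool" where
  "fin_gen_ideal R I \<longleftrightarrow> (\<exists>S. finite S \<and> S \<subseteq> R \<and> I = ideal_gen R S)"

definition colon :: "'k::field set \<Rightarrow> 'k set \<Rightarrow> 'k set" where
  "colon R E = {x. \<forall>e\<in>E. x * e \<in> R}"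

definition ideal_product :: "'k::field set \<Rightarrow> 'k set \<Rightarrow> 'k set" where
  "ideal_product A B = {\<Sum>i<n. a i * b i | (n::nat) a b. \<forall>i<n. a i \<in> A \<and> b i \<in> B}"

definition invertible_ideal :: "'k::field set \<Rightarrow> 'k set \<Rightarrow> bool" where
  "invertible_ideal R I \<longleftrightarrow> ideal_product I (colon R I) = R"

definition v_ideal :: "'k::field set \<Rightarrow> 'k set \<Rightarrow> bool" where
  "v_ideal R I \<longleftrightarrow> I = colon R (colon R I)"

definition graded_pruefer :: "'g set \<Rightarrow> 'k::field set \<Rightarrow> ('g \<Rightarrow> 'k set) \<Rightarrow> bool" where
  "graded_pruefer \<Gamma> R Rg \<longleftrightarrow>
     (\<forall>I. homogeneous_ideal \<Gamma> R Rg I \<and> fin_gen_ideal R I \<and> I \<noteq> {0} \<longrightarrow> invertible_ideal R I)"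

end

theory Submission
  imports Defs
begin

lemma sum_closed:
  assumes "0 \<in> X" "\<forall>x\<in>X. \<forall>y\<in>X. x + y \<in> X" "\<forall>i\<in>A. f i \<in> X"
  shows "sum f A \<in> X"
proof (cases "finite A")
  case True
  then show ?thesis using assms(3)
    by (induction A rule: finite_induct) (auto simp: assms(1,2))
next
  case False then show ?thesis using assms(1) by simp
qed

lemma gdR:
  assumes "graded_domain \<Gamma> R Rg"
  shows "0 \<in> R" "1 \<in> R" "\<And>x y. x\<in>R \<Longrightarrow> y\<in>R \<Longrightarrow> x+y\<in>R"
    "\<And>x y. x\<in>R \<Longrightarrow> y\<in>R \<Longrightarrow> x*y\<in>R" "\<And>x. x\<in>R \<Longrightarrow> -x\<in>R"
  using assms unfolding graded_domain_def by auto

lemma sumR: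
  assumes "graded_domain \<Gamma> R Rg" "\<forall>i\<in>A. f i \<in> R"
  shows "sum f A \<in> R"
  using sum_closed[of R] gdR[OF assms(1)] assms(2) by blast

lemma sum_ideal:
  assumes "is_ideal R I" "\<forall>i\<in>A. f i \<in> I"
  shows "sum f A \<in> I"
  using sum_closed[of I] assms unfolding is_ideal_def by blast

lemma ig_ideal:
  assumes gd: "graded_domain \<Gamma> R Rg" and SR: "S \<subseteq> R"
  shows "is_ideal R (ideal_gen R S)"
  unfolding is_ideal_def
proof (intro conjI ballI)
  show "ideal_gen R S \<subseteq> R"
  proof
    fix x assume "x \<in> ideal_gen R S"
    then obtain T c where "x = (\<Sum>s\<in>T. c s * s)" "T \<subseteq> S" "\<forall>s\<in>T. c s \<in> R"
      unfolding ideal_gen_def by blast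
    then have "\<forall>s\<in>T. c s * s \<in> R" using gdR(4)[OF gd] SR by blast
    then show "x \<in> R" unfolding \<open>x = _\<close> by (rule sumR[OF gd])
  qed
  show "0 \<in> ideal_gen R S" unfolding ideal_gen_def
    by (rule CollectI, rule exI[of _ "{}"], auto)
next
  fix x y assume "x \<in> ideal_gen R S" "y \<in> ideal_gen R S"
  then obtain T1 c1 T2 c2 where x: "x = (\<Sum>s\<in>T1. c1 s * s)" "finite T1" "T1 \<subseteq> S" "\<forall>s\<in>T1. c1 s \<in> R"
    and y: "y = (\<Sum>s\<in>T2. c2 s * s)" "finite T2" "T2 \<subseteq> S" "\<forall>s\<in>T2. c2 s \<in> R"
    unfolding ideal_gen_def by blast
  define c where "c s = (if s \<in> T1 then c1 s else 0) + (if s \<in> T2 then c2 s else 0)" for s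
  have fin: "finite (T1 \<union> T2)" using x y by auto
  have "(\<Sum>s\<in>T1 \<union> T2. c s * s) = (\<Sum>s\<in>T1 \<union> T2. (if s \<in> T1 then c1 s * s else 0))
     + (\<Sum>s\<in>T1 \<union> T2. (if s \<in> T2 then c2 s * s else 0))"
    unfolding c_def distrib_right sum.distrib by (intro arg_cong2[where f="(+)"] sum.cong) auto
  also have "\<dots> = x + y"
    using sum.inter_restrict[OF fin, of "\<lambda>s. c1 s * s" T1] sum.inter_restrict[OF fin, of "\<lambda>s. c2 s * s" T2] x y
    by (simp add: Int_absorb1)
  finally have "x + y = (\<Sum>s\<in>T1 \<union> T2. c s * s)" by simp
  moreover have "\<forall>s\<in>T1 \<union> T2. c s \<in> R" unfolding c_def using x y gdR[OF gd] by auto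
  ultimately show "x + y \<in> ideal_gen R S" unfolding ideal_gen_def using fin x(3) y(3)
    by (intro CollectI exI[of _ "T1 \<union> T2"] exI[of _ c]) simp
next
  fix r x assume r: "r \<in> R" and "x \<in> ideal_gen R S"
  then obtain T c where x: "x = (\<Sum>s\<in>T. c s * s)" "finite T" "T \<subseteq> S" "\<forall>s\<in>T. c s \<in> R"
    unfolding ideal_gen_def by blast
  have "r * x = (\<Sum>s\<in>T. (r * c s) * s)" unfolding x by (simp add: sum_distrib_left mult.assoc)
  moreover have "\<forall>s\<in>T. r * c s \<in> R" using x r gdR[OF gd] by auto
  ultimately show "r * x \<in> ideal_gen R S" unfolding ideal_gen_def using x(2,3)
    by (intro CollectI exI[of _ T] exI[of _ "\<lambda>s. r * c s"]) simp
qed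

lemma ig_sub:
  assumes gd: "graded_domain \<Gamma> R Rg"
  shows "S \<subseteq> ideal_gen R S"
proof
  fix s assume "s \<in> S"
  then show "s \<in> ideal_gen R S" unfolding ideal_gen_def
    by (intro CollectI exI[of _ "{s}"] exI[of _ "\<lambda>_. 1"]) (auto simp: gdR[OF gd])
qed

lemma ig_min:
  assumes "is_ideal R I" "S \<subseteq> I"
  shows "ideal_gen R S \<subseteq> I"
proof
  fix x assume "x \<in> ideal_gen R S"
  then obtain T c where x: "x = (\<Sum>s\<in>T. c s * s)" "T \<subseteq> S" "\<forall>s\<in>T. c s \<in> R"
    unfolding ideal_gen_def by blast
  show "x \<in> I" unfolding x
    by (rule sum_ideal[OF assms(1)]) (use x assms in \<open>auto simp: is_ideal_def\<close>)
qed

lemma colon_gen: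
  assumes gd: "graded_domain \<Gamma> R Rg" and "\<forall>s\<in>S. y * s \<in> R"
  shows "y \<in> colon R (ideal_gen R S)"
  unfolding colon_def
proof (intro CollectI ballI)
  fix e assume "e \<in> ideal_gen R S"
  then obtain T c where x: "e = (\<Sum>s\<in>T. c s * s)" "T \<subseteq> S" "\<forall>s\<in>T. c s \<in> R"
    unfolding ideal_gen_def by blast
  have "y * e = (\<Sum>s\<in>T. c s * (y * s))" unfolding x by (simp add: sum_distrib_left mult_ac)
  also have "\<dots> \<in> R" using x assms gdR[OF gd] by (intro sumR[OF gd]) blast
  finally show "y * e \<in> R" .
qed

lemma hom_sum_eq:
  assumes "finite F" "{\<alpha>. f \<alpha> \<noteq> 0} \<subseteq> F"
  shows "sum f {\<alpha>. f \<alpha> \<noteq> 0} = sum f F"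
  by (rule sum.mono_neutral_left) (use assms in auto)

lemma gdRg:
  assumes gd: "graded_domain \<Gamma> R Rg" and a: "\<alpha> \<in> \<Gamma>"
  shows "0 \<in> Rg \<alpha>" "Rg \<alpha> \<subseteq> R" "\<And>x y. x \<in> Rg \<alpha> \<Longrightarrow> y \<in> Rg \<alpha> \<Longrightarrow> x + y \<in> Rg \<alpha>"
proof -
  have h: "Rg \<alpha> \<subseteq> R \<and> 0 \<in> Rg \<alpha> \<and> (\<forall>x\<in>Rg \<alpha>. \<forall>y\<in>Rg \<alpha>. x - y \<in> Rg \<alpha>)"
    using gd a unfolding graded_domain_def by blast
  then show "0 \<in> Rg \<alpha>" "Rg \<alpha> \<subseteq> R" by auto
  fix x y assume "x \<in> Rg \<alpha>" "y \<in> Rg \<alpha>"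
  then have "0 - y \<in> Rg \<alpha>" using h by blast
  then have "x - (0 - y) \<in> Rg \<alpha>" using h \<open>x \<in> Rg \<alpha>\<close> by blast
  then show "x + y \<in> Rg \<alpha>" by simp
qed

lemma gd_Gadd:
  assumes "graded_domain \<Gamma> R Rg" "\<alpha> \<in> \<Gamma>" "\<beta> \<in> \<Gamma>"
  shows "\<alpha> + \<beta> \<in> \<Gamma>"
proof -
  have "\<forall>a\<in>\<Gamma>. \<forall>b\<in>\<Gamma>. a + b \<in> \<Gamma>" using assms(1) unfolding graded_domain_def by (elim conjE) assumption
  then show ?thesis using assms by blast
qed

lemma gd_mul:
  assumes "graded_domain \<Gamma> R Rg" "\<alpha> \<in> \<Gamma>" "\<beta> \<in> \<Gamma>" "x \<in> Rg \<alpha>" "y \<in> Rg \<beta>"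
  shows "x * y \<in> Rg (\<alpha> + \<beta>)"
proof -
  have "\<forall>\<alpha>\<in>\<Gamma>. \<forall>\<beta>\<in>\<Gamma>. \<forall>x\<in>Rg \<alpha>. \<forall>y\<in>Rg \<beta>. x * y \<in> Rg (\<alpha> + \<beta>)"
    using assms(1) unfolding graded_domain_def by (elim conjE) assumption
  then show ?thesis using assms by blast
qed

lemma gd_dec:
  assumes "graded_domain \<Gamma> R Rg" "r \<in> R"
  shows "\<exists>f. hom_family \<Gamma> Rg f \<and> r = sum f {\<alpha>. f \<alpha> \<noteq> 0}"
proof -
  have "\<forall>r\<in>R. \<exists>f. hom_family \<Gamma> Rg f \<and> r = sum f {\<alpha>. f \<alpha> \<noteq> 0}"
    using assms(1) unfolding graded_domain_def by (elim conjE) assumption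
  then show ?thesis using assms by blast
qed

lemma gen_hom:
  assumes gd: "graded_domain \<Gamma> R Rg" and S: "\<forall>s\<in>S. \<exists>\<alpha>\<in>\<Gamma>. s \<in> Rg \<alpha>"
  shows "homogeneous_ideal \<Gamma> R Rg (ideal_gen R S)"
proof -
  have SR: "S \<subseteq> R" using S gdRg[OF gd] by blast
  define J where "J = ideal_gen R S"
  have J: "is_ideal R J" using ig_ideal[OF gd SR] J_def by simp
  have SJ: "S \<subseteq> J" using ig_sub[OF gd] J_def by simp
  define P where "P x \<longleftrightarrow> (\<exists>f. hom_family \<Gamma> (\<lambda>\<alpha>. Rg \<alpha> \<inter> J) f \<and> x = sum f {\<alpha>. f \<alpha> \<noteq> 0})" for x
  have P0: "P 0" unfolding P_def hom_family_def
    using gdRg(1)[OF gd] J by (intro exI[of _ "\<lambda>_. 0"]) (auto simp: is_ideal_def)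
  have Padd: "P (x+y)" if "P x" "P y" for x y
  proof -
    obtain f where f: "hom_family \<Gamma> (\<lambda>\<alpha>. Rg \<alpha> \<inter> J) f" "x = sum f {\<alpha>. f \<alpha> \<noteq> 0}"
      using \<open>P x\<close> P_def by blast
    obtain g where g: "hom_family \<Gamma> (\<lambda>\<alpha>. Rg \<alpha> \<inter> J) g" "y = sum g {\<alpha>. g \<alpha> \<noteq> 0}"
      using \<open>P y\<close> P_def by blast
    define h where "h \<alpha> = f \<alpha> + g \<alpha>" for \<alpha>
    define U where "U = {\<alpha>. f \<alpha> \<noteq> 0} \<union> {\<alpha>. g \<alpha> \<noteq> 0}"
    have finU: "finite U" using f g unfolding U_def hom_family_def by auto
    have hU: "{\<alpha>. h \<alpha> \<noteq> 0} \<subseteq> U" unfolding U_def h_def by auto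
    have "hom_family \<Gamma> (\<lambda>\<alpha>. Rg \<alpha> \<inter> J) h"
      unfolding hom_family_def
    proof (intro conjI ballI)
      show "finite {\<alpha>. h \<alpha> \<noteq> 0}" using finU hU finite_subset by blast
      show "{\<alpha>. h \<alpha> \<noteq> 0} \<subseteq> \<Gamma>" using hU f g unfolding U_def hom_family_def by blast
      fix \<alpha> assume a: "\<alpha> \<in> \<Gamma>"
      then have "f \<alpha> \<in> Rg \<alpha> \<inter> J" "g \<alpha> \<in> Rg \<alpha> \<inter> J" using f g unfolding hom_family_def by auto
      then show "h \<alpha> \<in> Rg \<alpha> \<inter> J" unfolding h_def using gdRg(3)[OF gd a] J
        by (auto simp: is_ideal_def)
    qed
    moreover have "x + y = sum h {\<alpha>. h \<alpha> \<noteq> 0}"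
    proof -
      have "sum h {\<alpha>. h \<alpha> \<noteq> 0} = sum h U" using hom_sum_eq[OF finU hU] .
      also have "\<dots> = sum f U + sum g U" unfolding h_def by (simp add: sum.distrib)
      also have "sum f U = x" using f(2) hom_sum_eq[OF finU, of f] unfolding U_def by auto
      also have "sum g U = y" using g(2) hom_sum_eq[OF finU, of g] unfolding U_def by auto
      finally show ?thesis by simp
    qed
    ultimately show ?thesis unfolding P_def by blast
  qed
  have Pmul: "P (r * s)" if r: "r \<in> R" and s: "s \<in> S" for r s
  proof -
    obtain \<beta> where b: "\<beta> \<in> \<Gamma>" "s \<in> Rg \<beta>" using S s by blast
    obtain f where f: "hom_family \<Gamma> Rg f" "r = sum f {\<alpha>. f \<alpha> \<noteq> 0}"
      using gd_dec[OF gd r] by blast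
    define F where "F = {\<alpha>. f \<alpha> \<noteq> 0}"
    have finF: "finite F" and FG: "F \<subseteq> \<Gamma>" using f unfolding F_def hom_family_def by auto
    define g where "g \<delta> = (if \<delta> - \<beta> \<in> F then f (\<delta> - \<beta>) * s else 0)" for \<delta>
    have gsupp: "{\<delta>. g \<delta> \<noteq> 0} \<subseteq> (\<lambda>\<gamma>. \<gamma> + \<beta>) ` F"
    proof
      fix \<delta> assume "\<delta> \<in> {\<delta>. g \<delta> \<noteq> 0}"
      then have "\<delta> - \<beta> \<in> F" unfolding g_def by (auto split: if_splits)
      then show "\<delta> \<in> (\<lambda>\<gamma>. \<gamma> + \<beta>) ` F" by (intro image_eqI[of _ _ "\<delta> - \<beta>"]) auto
    qed
    have finI: "finite ((\<lambda>\<gamma>. \<gamma> + \<beta>) ` F)" using finF by simp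
    have "hom_family \<Gamma> (\<lambda>\<alpha>. Rg \<alpha> \<inter> J) g"
      unfolding hom_family_def
    proof (intro conjI ballI)
      show "finite {\<alpha>. g \<alpha> \<noteq> 0}" using finI gsupp finite_subset by blast
      show "{\<alpha>. g \<alpha> \<noteq> 0} \<subseteq> \<Gamma>"
      proof
        fix \<delta> assume "\<delta> \<in> {\<alpha>. g \<alpha> \<noteq> 0}"
        then obtain \<gamma> where "\<gamma> \<in> F" "\<delta> = \<gamma> + \<beta>" using gsupp by blast
        then show "\<delta> \<in> \<Gamma>" using FG b gd_Gadd[OF gd] by blast
      qed
      fix \<delta> assume d: "\<delta> \<in> \<Gamma>"
      show "g \<delta> \<in> Rg \<delta> \<inter> J"
      proof (cases "\<delta> - \<beta> \<in> F")
        case True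
        then have g1: "\<delta> - \<beta> \<in> \<Gamma>" using FG by blast
        have fR: "f (\<delta> - \<beta>) \<in> Rg (\<delta> - \<beta>)" using f g1 unfolding hom_family_def by blast
        have "f (\<delta> - \<beta>) * s \<in> Rg (\<delta> - \<beta> + \<beta>)" using gd_mul[OF gd g1 b(1) fR b(2)] .
        moreover have "f (\<delta> - \<beta>) * s \<in> J" using J SJ s fR gdRg(2)[OF gd g1] unfolding is_ideal_def by blast
        ultimately show ?thesis unfolding g_def using True by simp
      next
        case False
        then show ?thesis unfolding g_def using gdRg(1)[OF gd d] J by (simp add: is_ideal_def)
      qed
    qed
    moreover have "r * s = sum g {\<alpha>. g \<alpha> \<noteq> 0}"
    proof -
      have "sum g {\<alpha>. g \<alpha> \<noteq> 0} = sum g ((\<lambda>\<gamma>. \<gamma> + \<beta>) ` F)" using hom_sum_eq[OF finI gsupp] .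
      also have "\<dots> = sum (g \<circ> (\<lambda>\<gamma>. \<gamma> + \<beta>)) F" by (rule sum.reindex) (simp add: inj_on_def)
      also have "\<dots> = sum (\<lambda>\<gamma>. f \<gamma> * s) F" unfolding g_def by (intro sum.cong) auto
      also have "\<dots> = r * s" unfolding f(2) F_def by (simp add: sum_distrib_right)
      finally show ?thesis by simp
    qed
    ultimately show ?thesis unfolding P_def by blast
  qed
  have "P x" if "x \<in> J" for x
  proof -
    obtain T c where x: "x = (\<Sum>s\<in>T. c s * s)" "T \<subseteq> S" "\<forall>s\<in>T. c s \<in> R"
      using \<open>x \<in> J\<close> unfolding J_def ideal_gen_def by blast
    have "x \<in> {x. P x}" unfolding x
    proof (rule sum_closed)
      show "0 \<in> {x. P x}" using P0 by simp
      show "\<forall>x\<in>{x. P x}. \<forall>y\<in>{x. P x}. x + y \<in> {x. P x}" using Padd by simp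
      show "\<forall>i\<in>T. c i * i \<in> {x. P x}" using Pmul x by blast
    qed
    then show ?thesis by simp
  qed
  then have "\<forall>x\<in>J. P x" by blast
  then have A2: "\<forall>x\<in>ideal_gen R S. \<exists>f. hom_family \<Gamma> (\<lambda>\<alpha>. Rg \<alpha> \<inter> ideal_gen R S) f \<and> x = sum f {\<alpha>. f \<alpha> \<noteq> 0}"
    unfolding P_def J_def by simp
  have A1: "is_ideal R (ideal_gen R S)" using J unfolding J_def by simp
  show ?thesis unfolding homogeneous_ideal_def using A1 A2 by simp
qed


lemma ip_mem:
  assumes "x \<in> ideal_product A B"
  shows "\<exists>(n::nat) a b. x = (\<Sum>i<n. a i * b i) \<and> (\<forall>i<n. a i \<in> A \<and> b i \<in> B)"
  using assms unfolding ideal_product_def mem_Collect_eq .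

lemma inv_v:
  assumes gd: "graded_domain \<Gamma> R Rg" and I: "is_ideal R I" and inv: "invertible_ideal R I"
  shows "v_ideal R I"
  unfolding v_ideal_def
proof
  show "I \<subseteq> colon R (colon R I)" unfolding colon_def by (auto simp: mult.commute)
  show "colon R (colon R I) \<subseteq> I"
  proof
    fix x assume x: "x \<in> colon R (colon R I)"
    have "1 \<in> ideal_product I (colon R I)" using inv gdR(2)[OF gd] unfolding invertible_ideal_def by simp
    then obtain n :: nat and a b where one: "1 = (\<Sum>i<n. a i * b i)" "\<forall>i<n. a i \<in> I \<and> b i \<in> colon R I"
      using ip_mem by blast
    have "x = x * (\<Sum>i<n. a i * b i)" using one(1) by simp
    also have "\<dots> = (\<Sum>i<n. (x * b i) * a i)" by (simp add: sum_distrib_left mult_ac)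
    also have "\<dots> \<in> I"
    proof (rule sum_ideal[OF I], intro ballI)
      fix i assume "i \<in> {..<n}"
      then have "a i \<in> I" "b i \<in> colon R I" using one(2) by auto
      then have "x * b i \<in> R" using x unfolding colon_def by blast
      then show "x * b i * a i \<in> I" using I \<open>a i \<in> I\<close> unfolding is_ideal_def by blast
    qed
    finally show "x \<in> I" .
  qed
qed

lemma ig_empty:
  shows "ideal_gen R {} = {0}"
  unfolding ideal_gen_def by auto

lemma fg_hom_gens:
  assumes gd: "graded_domain \<Gamma> R Rg" and H: "homogeneous_ideal \<Gamma> R Rg I" and F: "fin_gen_ideal R I"
  shows "\<exists>S. finite S \<and> (\<forall>s\<in>S. s \<noteq> 0 \<and> (\<exists>\<alpha>\<in>\<Gamma>. s \<in> Rg \<alpha>)) \<and> I = ideal_gen R S"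
proof -
  obtain S0 where S0: "finite S0" "S0 \<subseteq> R" "I = ideal_gen R S0" using F unfolding fin_gen_ideal_def by blast
  have I: "is_ideal R I" using H unfolding homogeneous_ideal_def by blast
  have S0I: "S0 \<subseteq> I" using ig_sub[OF gd] S0(3) by blast
  have "\<forall>s\<in>S0. \<exists>f. hom_family \<Gamma> (\<lambda>\<alpha>. Rg \<alpha> \<inter> I) f \<and> s = sum f {\<alpha>. f \<alpha> \<noteq> 0}"
    using H S0I unfolding homogeneous_ideal_def by blast
  then obtain G where G: "\<And>s. s \<in> S0 \<Longrightarrow> hom_family \<Gamma> (\<lambda>\<alpha>. Rg \<alpha> \<inter> I) (G s) \<and> s = sum (G s) {\<alpha>. G s \<alpha> \<noteq> 0}"
    by metis
  define S where "S = (\<Union>s\<in>S0. G s ` {\<alpha>. G s \<alpha> \<noteq> 0})"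
  have finS: "finite S" unfolding S_def using S0(1) G unfolding hom_family_def by auto
  have Sh: "\<forall>x\<in>S. x \<noteq> 0 \<and> (\<exists>\<alpha>\<in>\<Gamma>. x \<in> Rg \<alpha>) \<and> x \<in> I"
  proof
    fix x assume "x \<in> S"
    then obtain s \<alpha> where s: "s \<in> S0" "G s \<alpha> \<noteq> 0" "x = G s \<alpha>" unfolding S_def by blast
    then have "\<alpha> \<in> \<Gamma>" using G unfolding hom_family_def by blast
    then have "G s \<alpha> \<in> Rg \<alpha> \<inter> I" using G s(1) unfolding hom_family_def by blast
    then show "x \<noteq> 0 \<and> (\<exists>\<alpha>\<in>\<Gamma>. x \<in> Rg \<alpha>) \<and> x \<in> I" using s \<open>\<alpha> \<in> \<Gamma>\<close> by auto
  qed
  have SI: "S \<subseteq> I" using Sh by blast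
  have SR: "S \<subseteq> R" using SI I unfolding is_ideal_def by blast
  have J: "is_ideal R (ideal_gen R S)" by (rule ig_ideal[OF gd SR])
  have "S0 \<subseteq> ideal_gen R S"
  proof
    fix s assume s: "s \<in> S0"
    have "s = sum (G s) {\<alpha>. G s \<alpha> \<noteq> 0}" using G[OF s] by blast
    also have "\<dots> \<in> ideal_gen R S"
    proof (rule sum_ideal[OF J], intro ballI)
      fix \<alpha> assume "\<alpha> \<in> {\<alpha>. G s \<alpha> \<noteq> 0}"
      then have "G s \<alpha> \<in> S" unfolding S_def using s by blast
      then show "G s \<alpha> \<in> ideal_gen R S" using ig_sub[OF gd] by blast
    qed
    finally show "s \<in> ideal_gen R S" .
  qed
  then have "I \<subseteq> ideal_gen R S" using ig_min[OF J] S0(3) by blast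
  moreover have "ideal_gen R S \<subseteq> I" using ig_min[OF I SI] .
  ultimately show ?thesis using finS Sh by (intro exI[of _ S]) blast
qed

lemma inv_from:
  assumes gd: "graded_domain \<Gamma> R Rg" and SR: "S \<subseteq> R" and fin: "finite S" and nz: "0 \<notin> S"
    and p: "\<forall>i\<in>S. p i \<in> R" "sum p S = 1" "\<forall>i\<in>S. \<forall>k\<in>S. \<exists>r\<in>R. p i * k = i * r"
  shows "invertible_ideal R (ideal_gen R S)"
proof -
  define I where "I = ideal_gen R S"
  have I: "is_ideal R I" unfolding I_def by (rule ig_ideal[OF gd SR])
  have "ideal_product I (colon R I) = R"
  proof
    show "ideal_product I (colon R I) \<subseteq> R"
    proof
      fix x assume "x \<in> ideal_product I (colon R I)"
      then obtain n :: nat and a b where x: "x = (\<Sum>i<n. a i * b i)" "\<forall>i<n. a i \<in> I \<and> b i \<in> colon R I"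
        using ip_mem by blast
      have "\<forall>i\<in>{..<n}. a i * b i \<in> R"
      proof
        fix i assume "i \<in> {..<n}"
        then have "a i \<in> I" "b i \<in> colon R I" using x(2) by auto
        then show "a i * b i \<in> R" unfolding colon_def by (auto simp: mult.commute)
      qed
      then show "x \<in> R" unfolding x(1) by (rule sumR[OF gd])
    qed
    show "R \<subseteq> ideal_product I (colon R I)"
    proof
      fix r assume r: "r \<in> R"
      obtain h where h: "bij_betw h {0..<card S} S" using ex_bij_betw_nat_finite[OF fin] by blast
      define bb where "bb i = r * p i / i" for i
      have bbc: "bb i \<in> colon R I" if i: "i \<in> S" for i
        unfolding I_def
      proof (rule colon_gen[OF gd], intro ballI)
        fix k assume k: "k \<in> S"
        obtain t where t: "t \<in> R" "p i * k = i * t" using p(3) i k by blast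
        have "i \<noteq> 0" using nz i by blast
        have "bb i * k = r * (p i * k) / i" unfolding bb_def by simp
        also have "\<dots> = r * t" using t(2) \<open>i \<noteq> 0\<close> by simp
        finally show "bb i * k \<in> R" using gdR(4)[OF gd r t(1)] by simp
      qed
      have "r = r * sum p S" using p(2) by simp
      also have "\<dots> = (\<Sum>i\<in>S. i * bb i)" unfolding bb_def sum_distrib_left
        by (rule sum.cong) (use nz in auto)
      also have "\<dots> = (\<Sum>j\<in>{0..<card S}. h j * bb (h j))"
        by (rule sum.reindex_bij_betw[OF h, symmetric])
      also have "\<dots> = (\<Sum>j<card S. h j * bb (h j))" by (simp add: lessThan_atLeast0)
      finally have req: "r = (\<Sum>j<card S. h j * bb (h j))" .
      have "\<forall>j<card S. h j \<in> I \<and> bb (h j) \<in> colon R I"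
      proof (intro allI impI conjI)
        fix j assume "j < card S"
        then have "h j \<in> S" using h unfolding bij_betw_def by auto
        then show "h j \<in> I" "bb (h j) \<in> colon R I" using ig_sub[OF gd] bbc unfolding I_def by auto
      qed
      then show "r \<in> ideal_product I (colon R I)" unfolding ideal_product_def using req
        by (intro CollectI exI[of _ "card S"] exI[of _ h] exI[of _ "\<lambda>j. bb (h j)"]) simp
    qed
  qed
  then show ?thesis unfolding invertible_ideal_def I_def .
qed


lemma integral_in:
  assumes "integrally_closed R" "c0 \<in> R" "c1 \<in> R" "x * x + c1 * x + c0 = 0"
  shows "x \<in> R"
proof -
  define c where "c i = (if i = 0 then c0 else c1)" for i :: nat
  have s: "(\<Sum>i<2. c i * x ^ i) = c0 + c1 * x"
    by (simp add: c_def numeral_2_eq_2 sum.lessThan_Suc)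
  have "x ^ 2 + (\<Sum>i<2. c i * x ^ i) = x * x + c1 * x + c0"
    unfolding s power2_eq_square by (simp only: add.assoc add.commute add.left_commute)
  also have "\<dots> = 0" by (rule assms(4))
  finally have e: "x ^ 2 + (\<Sum>i<2. c i * x ^ i) = 0" .
  have m: "\<forall>i<2. c i \<in> R" using assms(2,3) c_def by simp
  have ex: "\<exists>n::nat. \<exists>c. n > 0 \<and> (\<forall>i<n. c i \<in> R) \<and> x ^ n + (\<Sum>i<n. c i * x ^ i) = 0"
    using e m by (intro exI[of _ 2] exI[of _ c] conjI) simp_all
  have "\<forall>x. (\<exists>n::nat. \<exists>c. n > 0 \<and> (\<forall>i<n. c i \<in> R) \<and> x ^ n + (\<Sum>i<n. c i * x ^ i) = 0) \<longrightarrow> x \<in> R"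
    using assms(1) unfolding integrally_closed_def .
  then show ?thesis using ex by blast
qed

lemma two_sub:
  assumes "T \<subseteq> {A, B}"
  shows "T = {} \<or> T = {A} \<or> T = {B} \<or> T = {A, B}"
proof (cases "A \<in> T")
  case True
  show ?thesis
  proof (cases "B \<in> T")
    case True
    then have "T = {A, B}" using \<open>A \<in> T\<close> assms by blast
    then show ?thesis by blast
  next
    case False
    then have "T = {A}" using \<open>A \<in> T\<close> assms by blast
    then show ?thesis by blast
  qed
next
  case False
  show ?thesis
  proof (cases "B \<in> T")
    case True
    then have "T = {B}" using False assms by blast
    then show ?thesis by blast
  next
    case False
    then have "T = {}" using \<open>A \<notin> T\<close> assms by blast
    then show ?thesis by blast
  qed
qed

lemma pair:
  assumes gd: "graded_domain \<Gamma> R Rg" and ic: "integrally_closed R"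
    and V: "\<forall>I. homogeneous_ideal \<Gamma> R Rg I \<and> fin_gen_ideal R I \<and> I \<noteq> {0} \<longrightarrow> v_ideal R I"
    and a: "\<alpha> \<in> \<Gamma>" "a \<in> Rg \<alpha>" "a \<noteq> 0" and b: "\<beta> \<in> \<Gamma>" "b \<in> Rg \<beta>" "b \<noteq> 0"
  shows "\<exists>p\<in>R. (\<exists>r\<in>R. p * a = b * r) \<and> (\<exists>r\<in>R. (1 - p) * b = a * r)"
proof -
  have aR: "a \<in> R" using gdRg(2)[OF gd a(1)] a(2) by blast
  have bR: "b \<in> R" using gdRg(2)[OF gd b(1)] b(2) by blast
  define J where "J = ideal_gen R {a * a, b * b}"
  have hom: "homogeneous_ideal \<Gamma> R Rg J" unfolding J_def
  proof (rule gen_hom[OF gd], intro ballI)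
    fix s assume "s \<in> {a * a, b * b}"
    moreover have "a * a \<in> Rg (\<alpha> + \<alpha>)" by (rule gd_mul[OF gd a(1) a(1) a(2) a(2)])
    moreover have "b * b \<in> Rg (\<beta> + \<beta>)" by (rule gd_mul[OF gd b(1) b(1) b(2) b(2)])
    moreover have "\<alpha> + \<alpha> \<in> \<Gamma>" "\<beta> + \<beta> \<in> \<Gamma>" using gd_Gadd[OF gd] a(1) b(1) by auto
    ultimately show "\<exists>\<alpha>\<in>\<Gamma>. s \<in> Rg \<alpha>" by blast
  qed
  have fg: "fin_gen_ideal R J" unfolding fin_gen_ideal_def J_def
    using gdR(4)[OF gd] aR bR by (intro exI[of _ "{a * a, b * b}"]) auto
  have aaJ: "a * a \<in> J" and bbJ: "b * b \<in> J" using ig_sub[OF gd, of "{a * a, b * b}"] unfolding J_def by auto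
  have nz: "J \<noteq> {0}" using aaJ a(3) by auto
  have "v_ideal R J" using V hom fg nz by blast
  then have v: "J = colon R (colon R J)" unfolding v_ideal_def .
  have vsub: "colon R (colon R J) \<subseteq> J" using v by (rule equalityD2)
  have "a * b \<in> colon R (colon R J)" unfolding colon_def
  proof (intro CollectI ballI)
    fix y assume y: "y \<in> {x. \<forall>e\<in>J. x * e \<in> R}"
    then have y1: "y * (a * a) \<in> R" and y2: "y * (b * b) \<in> R" using aaJ bbJ by auto
    have eq: "a * b * y * (a * b * y) + 0 * (a * b * y) + (- (y * (a * a) * (y * (b * b)))) = 0"
      by (simp add: algebra_simps)
    have m: "- (y * (a * a) * (y * (b * b))) \<in> R" using gdR(4,5)[OF gd] y1 y2 by blast
    show "a * b * y \<in> R"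
      by (rule integral_in[OF ic m gdR(1)[OF gd] eq])
  qed
  with vsub have "a * b \<in> J" by (rule subsetD)
  then have "\<exists>T c. a * b = (\<Sum>s\<in>T. c s * s) \<and> finite T \<and> T \<subseteq> {a * a, b * b} \<and> (\<forall>s\<in>T. c s \<in> R)"
    unfolding J_def ideal_gen_def mem_Collect_eq .
  then obtain T c where T: "a * b = (\<Sum>s\<in>T. c s * s)" "T \<subseteq> {a * a, b * b}" "\<forall>s\<in>T. c s \<in> R"
    by blast
  have "\<exists>r\<in>R. \<exists>s\<in>R. a * b = r * (a * a) + s * (b * b)"
    using two_sub[OF T(2)]
  proof (elim disjE)
    assume "T = {}" then show ?thesis using T(1) gdR(1)[OF gd] by (intro bexI[of _ 0]) auto
  next
    assume "T = {a * a}" then show ?thesis using T(1,3) gdR(1)[OF gd]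
      by (intro bexI[of _ "c (a * a)"] bexI[of _ 0]) auto
  next
    assume "T = {b * b}" then show ?thesis using T(1,3) gdR(1)[OF gd]
      by (intro bexI[of _ 0] bexI[of _ "c (b * b)"]) auto
  next
    assume Tab: "T = {a * a, b * b}"
    show ?thesis
    proof (cases "a * a = b * b")
      case True then show ?thesis using T(1,3) Tab gdR(1)[OF gd]
        by (intro bexI[of _ "c (a * a)"] bexI[of _ 0]) auto
    next
      case False then show ?thesis using T(1,3) Tab
        by (intro bexI[of _ "c (a * a)"] bexI[of _ "c (b * b)"]) auto
    qed
  qed
  then obtain r s where rs: "r \<in> R" "s \<in> R" "a * b = r * (a * a) + s * (b * b)" by blast
  define x where "x = r * a / b"
  have num: "r * a * (r * a) - r * a * b + r * s * (b * b) = 0"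
  proof -
    have "r * a * (r * a) - r * a * b + r * s * (b * b) = r * (r * (a * a) + s * (b * b)) - r * (a * b)"
      by (simp add: algebra_simps)
    also have "\<dots> = 0" using rs(3) by simp
    finally show ?thesis .
  qed
  have "x * x + (-1) * x + r * s = (r * a * (r * a) - r * a * b + r * s * (b * b)) / (b * b)"
    unfolding x_def using b(3) by (simp add: field_simps)
  also have "\<dots> = 0" using num by simp
  finally have eqx: "x * x + (-1) * x + r * s = 0" .
  have m1: "r * s \<in> R" using gdR(4)[OF gd] rs(1,2) by blast
  have m2: "(-1) \<in> R" using gdR(2,5)[OF gd] by blast
  have xR: "x \<in> R" by (rule integral_in[OF ic m1 m2 eqx])
  define p where "p = 1 - x"
  have pR: "p \<in> R"
  proof -
    have "- x \<in> R" using xR gdR(5)[OF gd] by blast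
    then have "1 + - x \<in> R" using gdR(2,3)[OF gd] by blast
    then show ?thesis unfolding p_def by simp
  qed
  have "p * a = b * s"
  proof -
    have "p * a * b = a * b - r * (a * a)" unfolding p_def x_def using b(3) by (simp add: field_simps)
    also have "\<dots> = b * s * b" using rs(3) by (simp add: algebra_simps)
    finally show ?thesis using b(3) by simp
  qed
  moreover have "(1 - p) * b = a * r" unfolding p_def x_def using b(3) by (simp add: field_simps)
  ultimately show ?thesis using pR rs by blast
qed


lemma build:
  assumes gd: "graded_domain \<Gamma> R Rg" and fin: "finite S" and ne: "S \<noteq> {}" and SH: "S \<subseteq> H"
    and pr: "\<forall>a\<in>H. \<forall>b\<in>H. \<exists>p\<in>R. (\<exists>r\<in>R. p * a = b * r) \<and> (\<exists>r\<in>R. (1 - p) * b = a * r)"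
  shows "\<exists>p. (\<forall>i\<in>S. p i \<in> R) \<and> sum p S = 1 \<and> (\<forall>i\<in>S. \<forall>k\<in>S. \<exists>r\<in>R. p i * k = i * r)"
  using fin ne SH
proof (induction S rule: finite_ne_induct)
  case (singleton x)
  have "\<forall>i\<in>{x}. \<forall>k\<in>{x}. \<exists>r\<in>R. 1 * k = i * r"
    using gdR(2)[OF gd] by (intro ballI bexI[of _ 1]) auto
  then show ?case using gdR(2)[OF gd] by (intro exI[of _ "\<lambda>_. 1"]) simp
next
  case (insert c S)
  obtain p where p: "\<forall>i\<in>S. p i \<in> R" "sum p S = 1" "\<forall>i\<in>S. \<forall>k\<in>S. \<exists>r\<in>R. p i * k = i * r"
    using insert by blast
  have cH: "c \<in> H" and SH': "S \<subseteq> H" using insert.prems by auto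
  have "\<forall>i\<in>S. \<exists>q. q \<in> R \<and> (\<exists>r\<in>R. q * c = i * r) \<and> (\<exists>r\<in>R. (1 - q) * i = c * r)"
  proof
    fix i assume "i \<in> S"
    then have "i \<in> H" using SH' by blast
    then have "\<exists>q\<in>R. (\<exists>r\<in>R. q * c = i * r) \<and> (\<exists>r\<in>R. (1 - q) * i = c * r)"
      by (rule bspec[OF bspec[OF pr cH]])
    then show "\<exists>q. q \<in> R \<and> (\<exists>r\<in>R. q * c = i * r) \<and> (\<exists>r\<in>R. (1 - q) * i = c * r)" by blast
  qed
  from bchoice[OF this] obtain q where
    qa: "\<forall>i\<in>S. q i \<in> R \<and> (\<exists>r\<in>R. q i * c = i * r) \<and> (\<exists>r\<in>R. (1 - q i) * i = c * r)"
    by blast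
  have q: "q i \<in> R \<and> (\<exists>r\<in>R. q i * c = i * r) \<and> (\<exists>r\<in>R. (1 - q i) * i = c * r)" if "i \<in> S" for i
    using qa that by blast
  have one_q: "1 - q i \<in> R" if "i \<in> S" for i
  proof -
    have "- q i \<in> R" using q[OF that] gdR(5)[OF gd] by blast
    then have "1 + - q i \<in> R" using gdR(2,3)[OF gd] by blast
    then show ?thesis by simp
  qed
  define p' where "p' j = (if j = c then (\<Sum>i\<in>S. p i * (1 - q i)) else p j * q j)" for j
  have R1: "\<forall>i\<in>insert c S. p' i \<in> R"
  proof
    fix i assume i: "i \<in> insert c S"
    show "p' i \<in> R"
    proof (cases "i = c")
      case True
      have "\<forall>j\<in>S. p j * (1 - q j) \<in> R" using p(1) one_q gdR(4)[OF gd] by blast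
      then have "(\<Sum>j\<in>S. p j * (1 - q j)) \<in> R" by (rule sumR[OF gd])
      then show ?thesis unfolding p'_def using True by simp
    next
      case False
      then have iS: "i \<in> S" using i by blast
      have "p i * q i \<in> R" using gdR(4)[OF gd] p(1) q[OF iS] iS by blast
      then show ?thesis unfolding p'_def using False by simp
    qed
  qed
  have R2: "sum p' (insert c S) = 1"
  proof -
    have "sum p' (insert c S) = p' c + sum p' S" using insert.hyps by simp
    also have "sum p' S = (\<Sum>i\<in>S. p i * q i)" unfolding p'_def using insert.hyps by (intro sum.cong) auto
    also have "p' c = (\<Sum>i\<in>S. p i * (1 - q i))" unfolding p'_def by simp
    also have "(\<Sum>i\<in>S. p i * (1 - q i)) + (\<Sum>i\<in>S. p i * q i) = (\<Sum>i\<in>S. p i * (1 - q i) + p i * q i)"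
      by (simp only: sum.distrib)
    also have "\<dots> = sum p S" by (intro sum.cong refl) (simp add: algebra_simps)
    finally show ?thesis using p(2) by simp
  qed
  have R3: "\<exists>r\<in>R. p' i * k = i * r" if i: "i \<in> insert c S" and k: "k \<in> insert c S" for i k
  proof (cases "i = c")
    case False
    then have iS: "i \<in> S" using i by blast
    have pc: "p' i = p i * q i" unfolding p'_def using False by simp
    show ?thesis
    proof (cases "k = c")
      case True
      obtain r where r: "r \<in> R" "q i * c = i * r" using q[OF iS] by blast
      have "p' i * k = p i * (q i * c)" unfolding pc True by (simp add: mult.assoc)
      also have "\<dots> = i * (p i * r)" unfolding r(2) by (simp add: mult_ac)
      finally have "p' i * k = i * (p i * r)" .
      moreover have "p i * r \<in> R" using gdR(4)[OF gd] p(1) iS r(1) by blast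
      ultimately show ?thesis by (rule rev_bexI[rotated])
    next
      case False
      then have kS: "k \<in> S" using k by blast
      obtain r where r: "r \<in> R" "p i * k = i * r" using p(3) iS kS by blast
      have "p' i * k = q i * (p i * k)" unfolding pc by (simp add: mult_ac)
      also have "\<dots> = i * (q i * r)" unfolding r(2) by (simp add: mult_ac)
      finally have "p' i * k = i * (q i * r)" .
      moreover have "q i * r \<in> R" using gdR(4)[OF gd] q[OF iS] r(1) by blast
      ultimately show ?thesis by (rule rev_bexI[rotated])
    qed
  next
    case True
    have pc: "p' i = (\<Sum>j\<in>S. p j * (1 - q j))" unfolding p'_def using True by simp
    have "\<forall>j\<in>S. \<exists>r. r \<in> R \<and> p j * (1 - q j) * k = c * r"
    proof
      fix j assume jS: "j \<in> S"
      show "\<exists>r. r \<in> R \<and> p j * (1 - q j) * k = c * r"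
      proof (cases "k = c")
        case True
        have m: "p j * (1 - q j) \<in> R" using gdR(4)[OF gd] p(1) one_q jS by blast
        have e: "p j * (1 - q j) * k = c * (p j * (1 - q j))" using True by (simp add: mult_ac)
        show ?thesis
        proof (rule exI[of _ "p j * (1 - q j)"])
          show "p j * (1 - q j) \<in> R \<and> p j * (1 - q j) * k = c * (p j * (1 - q j))" using m e by (rule conjI)
        qed
      next
        case False
        then have kS: "k \<in> S" using k by blast
        obtain r1 where r1: "r1 \<in> R" "p j * k = j * r1" using p(3) jS kS by blast
        obtain r2 where r2: "r2 \<in> R" "(1 - q j) * j = c * r2" using q[OF jS] by blast
        have "p j * (1 - q j) * k = (1 - q j) * (p j * k)" by (simp add: mult_ac)
        also have "\<dots> = (1 - q j) * j * r1" unfolding r1(2) by (simp only: mult.assoc)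
        also have "\<dots> = c * (r2 * r1)" unfolding r2(2) by (simp only: mult.assoc)
        finally have e: "p j * (1 - q j) * k = c * (r2 * r1)" .
        have "r2 * r1 \<in> R" using gdR(4)[OF gd] r1(1) r2(1) by blast
        show ?thesis
        proof (rule exI[of _ "r2 * r1"])
          show "r2 * r1 \<in> R \<and> p j * (1 - q j) * k = c * (r2 * r1)" using \<open>r2 * r1 \<in> R\<close> e by (rule conjI)
        qed
      qed
    qed
    from bchoice[OF this] obtain g where ga: "\<forall>j\<in>S. g j \<in> R \<and> p j * (1 - q j) * k = c * g j" by blast
    have g: "g j \<in> R \<and> p j * (1 - q j) * k = c * g j" if "j \<in> S" for j using ga that by blast
    have "p' i * k = (\<Sum>j\<in>S. p j * (1 - q j) * k)" unfolding pc by (simp add: sum_distrib_right)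
    also have "\<dots> = (\<Sum>j\<in>S. c * g j)" using g by (intro sum.cong) auto
    also have "\<dots> = c * sum g S" by (simp add: sum_distrib_left)
    finally have e: "p' i * k = c * sum g S" .
    have "sum g S \<in> R" using g by (intro sumR[OF gd]) blast
    have e2: "p' i * k = i * sum g S" using e True by simp
    from e2 \<open>sum g S \<in> R\<close> show ?thesis by (rule rev_bexI[rotated])
  qed
  show ?case using R1 R2 R3 by blast
qed

theorem corollary3p4:
  fixes \<Gamma> :: "'g::ab_group_add set" and R :: "'k::field set" and Rg :: "'g \<Rightarrow> 'k set"
  assumes "graded_domain \<Gamma> R Rg"
    and "is_quotient_field R"
    and "integrally_closed R"
  shows "graded_pruefer \<Gamma> R Rg \<longleftrightarrow>
    (\<forall>I. homogeneous_ideal \<Gamma> R Rg I \<and> fin_gen_ideal R I \<and> I \<noteq> {0} \<longrightarrow> v_ideal R I)"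
proof
  assume gp: "graded_pruefer \<Gamma> R Rg"
  show "\<forall>I. homogeneous_ideal \<Gamma> R Rg I \<and> fin_gen_ideal R I \<and> I \<noteq> {0} \<longrightarrow> v_ideal R I"
  proof (intro allI impI)
    fix I assume h: "homogeneous_ideal \<Gamma> R Rg I \<and> fin_gen_ideal R I \<and> I \<noteq> {0}"
    then have "invertible_ideal R I" using gp unfolding graded_pruefer_def by blast
    moreover have "is_ideal R I" using h unfolding homogeneous_ideal_def by blast
    ultimately show "v_ideal R I" using inv_v[OF assms(1)] by blast
  qed
next
  assume V: "\<forall>I. homogeneous_ideal \<Gamma> R Rg I \<and> fin_gen_ideal R I \<and> I \<noteq> {0} \<longrightarrow> v_ideal R I"
  show "graded_pruefer \<Gamma> R Rg" unfolding graded_pruefer_def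
  proof (intro allI impI)
    fix I assume h: "homogeneous_ideal \<Gamma> R Rg I \<and> fin_gen_ideal R I \<and> I \<noteq> {0}"
    then obtain S where S: "finite S" "\<forall>s\<in>S. s \<noteq> 0 \<and> (\<exists>\<alpha>\<in>\<Gamma>. s \<in> Rg \<alpha>)" "I = ideal_gen R S"
      using fg_hom_gens[OF assms(1)] by blast
    define H where "H = {s. s \<noteq> 0 \<and> (\<exists>\<alpha>\<in>\<Gamma>. s \<in> Rg \<alpha>)}"
    have SH: "S \<subseteq> H" using S(2) H_def by blast
    have ne: "S \<noteq> {}" using S(3) h ig_empty by metis
    have pr: "\<forall>a\<in>H. \<forall>b\<in>H. \<exists>p\<in>R. (\<exists>r\<in>R. p * a = b * r) \<and> (\<exists>r\<in>R. (1 - p) * b = a * r)"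
    proof (intro ballI)
      fix a b assume "a \<in> H" "b \<in> H"
      then obtain \<alpha> \<beta> where ab: "\<alpha> \<in> \<Gamma>" "a \<in> Rg \<alpha>" "a \<noteq> 0" "\<beta> \<in> \<Gamma>" "b \<in> Rg \<beta>" "b \<noteq> 0"
        unfolding H_def by blast
      show "\<exists>p\<in>R. (\<exists>r\<in>R. p * a = b * r) \<and> (\<exists>r\<in>R. (1 - p) * b = a * r)"
        by (rule pair[OF assms(1) assms(3) V ab])
    qed
    obtain p where p: "\<forall>i\<in>S. p i \<in> R" "sum p S = 1" "\<forall>i\<in>S. \<forall>k\<in>S. \<exists>r\<in>R. p i * k = i * r"
      using build[OF assms(1) S(1) ne SH pr] by blast
    have SR: "S \<subseteq> R" using S(2) gdRg(2)[OF assms(1)] by blast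
    have "0 \<notin> S" using S(2) by blast
    then show "invertible_ideal R I" unfolding S(3) using inv_from[OF assms(1) SR S(1) _ p] by blast
  qed
qed

end
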